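(* Let $1\le p,q<\infty$, $\theta>0$, and let $E$ be a bounded Lebesgue measurable subset of $\mathbb R$. Then: (a) $\chi_E\in l^{q),\theta}(L^p)$; (b) $\chi_E\in l^{q)',\theta}(L^p)$; (c) there exists a constant $c_E>0$ such that $\int_E|g(x)|\,dx\le c_E\|g\|_{p,q),\theta}$ for every measurable function $g\in l^{q),\theta}(L^p)$.
   Context: Index set $\mathbb Z$, $I_k=[k,k+1)$. The space $l^{q),\theta}(L^p)$ consists of complex-valued measurable $g$ on $\mathbb R$ with $g\chi_{I_k}\in L^p$ for all $k$ and $\|g\|_{p,q),\theta}:=\sup_{\varepsilon>0}\Big(\varepsilon^{\theta}\sum_{k\in\mathbb Z}\big(\int_{I_k}|g|^p\big)^{\frac{q(1+\varepsilon)}{p}}\Big)^{\frac{1}{q(1+\varepsilon)}}<\infty$. The small Lebesgue sequence space $l^{q)',\theta}$ consists of sequences $y=\{y_k\}_{k\in\mathbb Z}$ with $$\|y\|_{l^{q)',\theta}}:=\inf\Big\{\sum_{j\in\mathbb Z}\inf_{\varepsilon>0}\varepsilon^{\frac{-\theta}{q(1+\varepsilon)}}\Big(\sum_{k\in\mathbb Z}y_{k,j}^{(q(1+\varepsilon))'}\Big)^{\frac{1}{(q(1+\varepsilon))'}}\Big\}<\infty,$$ the outer infimum over all decompositions $|y_k|=\sum_{j\in\mathbb Z}y_{k,j}$ with $y_{k,j}\ge0$, and $(q(1+\varepsilon))'$ the conjugate exponent of $q(1+\varepsilon)$. The space $l^{q)',\theta}(L^p)$ consists of complex-valued measurable $f$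 on $\mathbb R$ with $f\chi_{I_k}\in L^p$ for all $k$ and $\|f\|_{p,q)',\theta}:=\big\|\{\|f\chi_{I_k}\|_{L^p}\}_{k\in\mathbb Z}\big\|_{l^{q)',\theta}}<\infty$. *)

theory Defs
  imports "HOL-Analysis.Analysis"
begin

definition unit_int :: "int \<Rightarrow> real set" where
  "unit_int k = {real_of_int k ..< real_of_int k + 1}"

text \<open>Real power of an extended nonnegative real (used only with positive exponents).\<close>
definition epowr :: "ennreal \<Rightarrow> real \<Rightarrow> ennreal" where
  "epowr x r = (if x = \<infinity> then \<infinity> else ennreal (enn2real x powr r))"

definition loc_Lp :: "real \<Rightarrow> (real \<Rightarrow> complex) \<Rightarrow> bool" where
  "loc_Lp p g \<longleftrightarrow> g \<in> borel_measurable lebesgue \<and>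
     (\<forall>k. (\<integral>\<^sup>+ x\<in>unit_int k. ennreal (norm (g x) powr p) \<partial>lebesgue) < \<infinity>)"

definition loc_int :: "real \<Rightarrow> (real \<Rightarrow> complex) \<Rightarrow> int \<Rightarrow> real" where
  "loc_int p g k = enn2real (\<integral>\<^sup>+ x\<in>unit_int k. ennreal (norm (g x) powr p) \<partial>lebesgue)"

definition grand_norm :: "real \<Rightarrow> real \<Rightarrow> real \<Rightarrow> (real \<Rightarrow> complex) \<Rightarrow> ennreal" where
  "grand_norm p q \<theta> g = (SUP \<epsilon>\<in>{0<..}.
      epowr (ennreal (\<epsilon> powr \<theta>) *
             (\<Sum>\<^sub>\<infinity> k::int. ennreal (loc_int p g k powr (q * (1 + \<epsilon>) / p))))
            (1 / (q * (1 + \<epsilon>))))"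

definition grand_space :: "real \<Rightarrow> real \<Rightarrow> real \<Rightarrow> (real \<Rightarrow> complex) set" where
  "grand_space p q \<theta> = {g. loc_Lp p g \<and> grand_norm p q \<theta> g < \<infinity>}"

definition conj_exp :: "real \<Rightarrow> real" where
  "conj_exp r = r / (r - 1)"

definition small_seq_norm :: "real \<Rightarrow> real \<Rightarrow> (int \<Rightarrow> real) \<Rightarrow> ennreal" where
  "small_seq_norm q \<theta> y = (INF d\<in>{d :: int \<Rightarrow> int \<Rightarrow> real.
        (\<forall>k j. 0 \<le> d k j) \<and> (\<forall>k. (\<Sum>\<^sub>\<infinity> j::int. ennreal (d k j)) = ennreal \<bar>y k\<bar>)}.
      \<Sum>\<^sub>\<infinity> j::int. (INF \<epsilon>\<in>{0<..}.
         ennreal (\<epsilon> powr (- \<theta> / (q * (1 + \<epsilon>)))) *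
         epowr (\<Sum>\<^sub>\<infinity> k::int. ennreal (d k j powr conj_exp (q * (1 + \<epsilon>))))
               (1 / conj_exp (q * (1 + \<epsilon>)))))"

definition small_norm :: "real \<Rightarrow> real \<Rightarrow> real \<Rightarrow> (real \<Rightarrow> complex) \<Rightarrow> ennreal" where
  "small_norm p q \<theta> f = small_seq_norm q \<theta> (\<lambda>k. loc_int p f k powr (1 / p))"

definition small_space :: "real \<Rightarrow> real \<Rightarrow> real \<Rightarrow> (real \<Rightarrow> complex) set" where
  "small_space p q \<theta> = {f. loc_Lp p f \<and> small_norm p q \<theta> f < \<infinity>}"

end

theory Submission
  imports Defs
begin

lemma unit_int_iff: "x \<in> unit_int k \<longleftrightarrow> \<lfloor>x\<rfloor> = k"
  unfolding unit_int_def by (auto simp: floor_eq_iff)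

lemma unit_int_sets[measurable]: "unit_int k \<in> sets lebesgue"
  unfolding unit_int_def by simp

lemma emeasure_unit_int: "emeasure lebesgue (unit_int k) = 1"
  unfolding unit_int_def by simp

lemma infsum_fin:
  fixes h :: "int \<Rightarrow> ennreal"
  assumes "finite K" "\<And>k. k \<notin> K \<Longrightarrow> h k = 0"
  shows "(\<Sum>\<^sub>\<infinity> k. h k) = sum h K"
proof -
  have "(\<Sum>\<^sub>\<infinity> k. h k) = infsum h K"
    by (rule infsum_cong_neutral) (use assms in auto)
  also have "\<dots> = sum h K" using assms by simp
  finally show ?thesis .
qed

lemma infsum_single_le:
  fixes h :: "int \<Rightarrow> ennreal"
  shows "h k \<le> (\<Sum>\<^sub>\<infinity> k. h k)"
proof -
  have "infsum h {k} \<le> infsum h UNIV"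
    by (rule infsum_mono_neutral) (auto intro: nonneg_summable_on_complete)
  then show ?thesis by simp
qed

lemma pow_bound:
  fixes l t p :: real
  assumes "0 < l" "0 \<le> t" "1 \<le> p"
  shows "t \<le> l + t powr p / l powr (p - 1)"
proof (cases "t \<le> l")
  case True
  then show ?thesis using assms by (smt (verit) divide_nonneg_nonneg powr_ge_zero)
next
  case False
  then have tp: "t > 0" using assms by simp
  have "l powr (p-1) \<le> t powr (p-1)" using False assms by (intro powr_mono2) auto
  moreover have "t powr p = t * t powr (p-1)" using tp by (simp add: powr_diff)
  moreover have "l powr (p-1) > 0" using assms by simp
  ultimately have "t \<le> t powr p / l powr (p - 1)"
    using tp by (simp add: le_divide_eq mult_left_mono)
  then show ?thesis using assms by simp
qed

lemma loc_bound_l: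
  assumes "loc_Lp p g" "1 \<le> p" "0 < l"
  shows "(\<integral>\<^sup>+x\<in>unit_int k. ennreal (norm (g x)) \<partial>lebesgue)
      \<le> ennreal (l + loc_int p g k / l powr (p - 1))"
proof -
  let ?A = "\<integral>\<^sup>+x\<in>unit_int k. ennreal (norm (g x) powr p) \<partial>lebesgue"
  have gm: "g \<in> borel_measurable lebesgue" and fin: "?A < \<infinity>"
    using assms(1) unfolding loc_Lp_def by auto
  have Aeq: "?A = ennreal (loc_int p g k)"
    unfolding loc_int_def using fin by (simp add: ennreal_enn2real_if less_top)
  define c where "c = 1 / l powr (p - 1)"
  have c0: "c \<ge> 0" unfolding c_def by simp
  have "(\<integral>\<^sup>+x\<in>unit_int k. ennreal (norm (g x)) \<partial>lebesgue)
     \<le> (\<integral>\<^sup>+x. ennreal l * indicator (unit_int k) x +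
            ennreal c * (ennreal (norm (g x) powr p) * indicator (unit_int k) x) \<partial>lebesgue)"
  proof (rule nn_integral_mono)
    fix x
    show "ennreal (norm (g x)) * indicator (unit_int k) x \<le> ennreal l * indicator (unit_int k) x +
            ennreal c * (ennreal (norm (g x) powr p) * indicator (unit_int k) x)"
    proof (cases "x \<in> unit_int k")
      case True
      have "norm (g x) \<le> l + c * norm (g x) powr p"
        using pow_bound[OF assms(3) norm_ge_zero assms(2), of "g x"] unfolding c_def by simp
      then have "ennreal (norm (g x)) \<le> ennreal (l + c * norm (g x) powr p)"
        by (rule ennreal_leI)
      also have "\<dots> = ennreal l + ennreal c * ennreal (norm (g x) powr p)"
        using assms c0 by (simp add: ennreal_plus ennreal_mult)
      finally show ?thesis using True by simp
    qed simp
  qed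
  also have "\<dots> = (\<integral>\<^sup>+x. ennreal l * indicator (unit_int k) x \<partial>lebesgue) +
            (\<integral>\<^sup>+x. ennreal c * (ennreal (norm (g x) powr p) * indicator (unit_int k) x) \<partial>lebesgue)"
    by (rule nn_integral_add) (use gm in auto)
  also have "\<dots> = ennreal l * emeasure lebesgue (unit_int k) + ennreal c * ?A"
  proof -
    have "(\<integral>\<^sup>+x. ennreal l * indicator (unit_int k) x \<partial>lebesgue) = ennreal l * emeasure lebesgue (unit_int k)"
      by (rule nn_integral_cmult_indicator) simp
    moreover have "(\<integral>\<^sup>+x. ennreal c * (ennreal (norm (g x) powr p) * indicator (unit_int k) x) \<partial>lebesgue) = ennreal c * ?A"
      by (rule nn_integral_cmult) (use gm in auto)
    ultimately show ?thesis by simp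
  qed
  also have "\<dots> = ennreal (l + c * loc_int p g k)"
    using assms c0 Aeq emeasure_unit_int
    by (simp add: ennreal_plus ennreal_mult loc_int_def)
  finally show ?thesis unfolding c_def by simp
qed

lemma loc_int_nonneg: "loc_int p g k \<ge> 0"
  unfolding loc_int_def by simp

lemma loc_bound:
  assumes "loc_Lp p g" "1 \<le> p"
  shows "(\<integral>\<^sup>+x\<in>unit_int k. ennreal (norm (g x)) \<partial>lebesgue)
      \<le> 2 * ennreal (loc_int p g k powr (1 / p))"
proof (cases "loc_int p g k = 0")
  case True
  have "(\<integral>\<^sup>+x\<in>unit_int k. ennreal (norm (g x)) \<partial>lebesgue) \<le> 0"
  proof (rule ennreal_le_epsilon)
    fix e :: real assume "0 < e"
    then show "(\<integral>\<^sup>+x\<in>unit_int k. ennreal (norm (g x)) \<partial>lebesgue) \<le> 0 + ennreal e"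
      using loc_bound_l[OF assms \<open>0 < e\<close>, of k] True by simp
  qed
  then show ?thesis by simp
next
  case False
  define a where "a = loc_int p g k"
  have a0: "a > 0" using False loc_int_nonneg[of p g k] unfolding a_def by linarith
  define l where "l = a powr (1/p)"
  have l0: "l > 0" unfolding l_def using a0 by simp
  have "l powr (p - 1) = a powr ((p - 1) / p)" unfolding l_def using a0 by (simp add: powr_powr)
  then have "a / l powr (p - 1) = a powr 1 / a powr ((p - 1) / p)" using a0 by simp
  also have "\<dots> = a powr (1 - (p - 1) / p)" by (simp add: powr_diff)
  also have "1 - (p - 1) / p = 1 / p" using assms(2) by (simp add: field_simps)
  finally have eq: "a / l powr (p - 1) = l" unfolding l_def .
  have "(\<integral>\<^sup>+x\<in>unit_int k. ennreal (norm (g x)) \<partial>lebesgue) \<le> ennreal (l + a / l powr (p - 1))"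
    using loc_bound_l[OF assms l0, of k] unfolding a_def by simp
  also have "\<dots> = 2 * ennreal l" using eq l0 by (simp add: ennreal_mult)
  finally show ?thesis unfolding l_def a_def .
qed

lemma loc_le_grand:
  assumes "1 \<le> p" "1 \<le> q"
  shows "ennreal (loc_int p g k powr (1 / p)) \<le> grand_norm p q \<theta> g"
proof -
  let ?S = "\<Sum>\<^sub>\<infinity> k::int. ennreal (loc_int p g k powr (q * (1 + 1) / p))"
  have "epowr (ennreal (1 powr \<theta>) * ?S) (1 / (q * (1 + 1))) \<le> grand_norm p q \<theta> g"
    unfolding grand_norm_def by (rule SUP_upper) simp
  moreover have "ennreal (loc_int p g k powr (1 / p)) \<le> epowr ?S (1 / (q * 2))"
  proof (cases "?S = \<infinity>")
    case True then show ?thesis by (simp add: epowr_def)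
  next
    case False
    have sl: "ennreal (loc_int p g k powr (q * (1 + 1) / p)) \<le> ?S"
      by (rule infsum_single_le)
    then have le: "loc_int p g k powr (q * 2 / p) \<le> enn2real ?S"
      using enn2real_mono[OF sl] False by (simp add: top.not_eq_extremum)
    have "loc_int p g k powr (1 / p) = (loc_int p g k powr (q * 2 / p)) powr (1 / (q * 2))"
      using assms loc_int_nonneg[of p g k] by (simp add: powr_powr)
    also have "\<dots> \<le> enn2real ?S powr (1 / (q * 2))"
      using le assms by (intro powr_mono2) auto
    finally show ?thesis using False by (simp add: epowr_def ennreal_leI)
  qed
  ultimately show ?thesis by simp
qed

lemma eps_bound:
  fixes e q \<theta> s :: real
  assumes "0 < e" "1 \<le> q" "0 < \<theta>" "0 \<le> s"
  shows "(e powr \<theta> * s) powr (1 / (q * (1 + e))) \<le> exp \<theta> * (1 + s)"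
proof -
  define r where "r = 1 / (q * (1 + e))"
  have qe: "1 \<le> q * (1 + e)" using assms by (smt (verit) mult_le_cancel_left1)
  have r0: "0 < r" "r \<le> 1" unfolding r_def using qe by auto
  have "(e powr \<theta> * s) powr r = e powr (\<theta> * r) * s powr r"
    using assms by (simp add: powr_mult powr_powr)
  moreover have "e powr (\<theta> * r) \<le> exp \<theta>"
  proof -
    have "r * ln e \<le> 1"
    proof (cases "ln e \<le> 0")
      case True then show ?thesis using r0 by (smt (verit) mult_nonneg_nonpos)
    next
      case False
      have "ln e \<le> e - 1" using ln_le_minus_one assms by simp
      also have "\<dots> \<le> q * (1 + e)" using assms by (smt (verit) mult_le_cancel_right1)
      finally show ?thesis unfolding r_def using qe by simp
    qed
    then have "\<theta> * r * ln e \<le> \<theta>" using assms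
      by (metis mult.assoc mult.right_neutral mult_left_mono less_imp_le)
    then show ?thesis using assms by (simp add: powr_def)
  qed
  moreover have "s powr r \<le> 1 + s"
  proof (cases "s \<le> 1")
    case True then show ?thesis using r0 assms
      using powr_le1[of r s] by simp
  next
    case False
    then have "s powr r \<le> s powr 1" using r0 by (intro powr_mono) auto
    then show ?thesis using False by simp
  qed
  ultimately show ?thesis unfolding r_def[symmetric]
    by (smt (verit) exp_gt_zero mult_mono powr_ge_zero)
qed

theorem theorem3p10:
  fixes p q \<theta> :: real and E :: "real set"
  assumes "1 \<le> p" and "1 \<le> q" and "0 < \<theta>"
    and "E \<in> sets lebesgue" and "bounded E"
  shows "(indicator E :: real \<Rightarrow> complex) \<in> grand_space p q \<theta> \<and>
         (indicator E :: real \<Rightarrow> complex) \<in> small_space p q \<theta> \<and>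
         (\<exists>c::real. c > 0 \<and> (\<forall>g\<in>grand_space p q \<theta>.
           (\<integral>\<^sup>+ x\<in>E. ennreal (norm (g x)) \<partial>lebesgue) \<le> ennreal c * grand_norm p q \<theta> g))"
proof -
  obtain a where a: "\<forall>x\<in>E. \<bar>x\<bar> \<le> a" using assms(5) bounded_real by auto
  define K where "K = {-\<lceil>a\<rceil> - 1 .. \<lceil>a\<rceil>}"
  have finK: "finite K" unfolding K_def by simp
  have Kin: "\<lfloor>x\<rfloor> \<in> K" if "x \<in> E" for x
  proof -
    have "\<bar>x\<bar> \<le> a" using a that by auto
    then show ?thesis unfolding K_def
      by (auto simp: floor_le_iff le_floor_iff) (smt (verit) ceiling_correct of_int_1 of_int_diff of_int_minus)+
  qed
  have Kout: "E \<inter> unit_int k = {}" if "k \<notin> K" for k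
    using Kin that by (auto simp: unit_int_iff)
  define f :: "real \<Rightarrow> complex" where "f = indicator E"
  have fm: "f \<in> borel_measurable lebesgue" unfolding f_def using assms(4) by simp
  have fint: "(\<integral>\<^sup>+x\<in>unit_int k. ennreal (norm (f x) powr p) \<partial>lebesgue) = emeasure lebesgue (E \<inter> unit_int k)" for k
  proof -
    have "(\<integral>\<^sup>+x\<in>unit_int k. ennreal (norm (f x) powr p) \<partial>lebesgue)
        = (\<integral>\<^sup>+x. indicator (E \<inter> unit_int k) x \<partial>lebesgue)"
      by (rule nn_integral_cong) (auto simp: f_def indicator_def)
    also have "\<dots> = emeasure lebesgue (E \<inter> unit_int k)"
      using assms(4) by simp
    finally show ?thesis .
  qed
  have fle1: "emeasure lebesgue (E \<inter> unit_int k) \<le> 1" for k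
    using emeasure_mono[of "E \<inter> unit_int k" "unit_int k" lebesgue] emeasure_unit_int by simp
  have lf0: "loc_int p f k \<ge> 0" for k by (rule loc_int_nonneg)
  have lf1: "loc_int p f k \<le> 1" for k
    unfolding loc_int_def fint using enn2real_mono[OF fle1[of k]] by simp
  have lfK: "loc_int p f k = 0" if "k \<notin> K" for k
    unfolding loc_int_def fint using Kout[OF that] by simp
  have locf: "loc_Lp p f"
    unfolding loc_Lp_def fint
  proof (intro conjI allI fm)
    fix k
    show "emeasure lebesgue (E \<inter> unit_int k) < \<infinity>"
      unfolding infinity_ennreal_def using fle1[of k] ennreal_one_less_top by (rule order.strict_trans1)
  qed
  have "grand_norm p q \<theta> f \<le> ennreal (exp \<theta> * (1 + real (card K)))"
    unfolding grand_norm_def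
  proof (rule SUP_least)
    fix e :: real assume "e \<in> {0<..}"
    then have e0: "0 < e" by simp
    define r where "r = q * (1 + e) / p"
    have r0: "r \<ge> 0" unfolding r_def using assms e0 by simp
    define s where "s = (\<Sum>k\<in>K. loc_int p f k powr r)"
    have s0: "s \<ge> 0" unfolding s_def by (simp add: sum_nonneg)
    have sK: "s \<le> real (card K)"
    proof -
      have "s \<le> (\<Sum>k\<in>K. 1)" unfolding s_def
        by (rule sum_mono) (use powr_le1 lf0 lf1 r0 in auto)
      then show ?thesis by simp
    qed
    have "(\<Sum>\<^sub>\<infinity> k::int. ennreal (loc_int p f k powr r)) = (\<Sum>k\<in>K. ennreal (loc_int p f k powr r))"
      by (rule infsum_fin[OF finK]) (simp add: lfK)
    also have "\<dots> = ennreal s" unfolding s_def by simp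
    finally have S: "(\<Sum>\<^sub>\<infinity> k::int. ennreal (loc_int p f k powr r)) = ennreal s" .
    have "epowr (ennreal (e powr \<theta>) * (\<Sum>\<^sub>\<infinity> k::int. ennreal (loc_int p f k powr r))) (1 / (q * (1 + e)))
        = ennreal ((e powr \<theta> * s) powr (1 / (q * (1 + e))))"
      unfolding S epowr_def using s0 by (simp add: ennreal_mult[symmetric])
    also have "\<dots> \<le> ennreal (exp \<theta> * (1 + s))"
      by (rule ennreal_leI, rule eps_bound) (use e0 assms s0 in auto)
    also have "\<dots> \<le> ennreal (exp \<theta> * (1 + real (card K)))"
      using sK by (intro ennreal_leI mult_left_mono) auto
    finally show "epowr (ennreal (e powr \<theta>) * (\<Sum>\<^sub>\<infinity> k::int. ennreal (loc_int p f k powr (q * (1 + e) / p)))) (1 / (q * (1 + e)))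
        \<le> ennreal (exp \<theta> * (1 + real (card K)))" unfolding r_def .
  qed
  then have A: "f \<in> grand_space p q \<theta>"
    unfolding grand_space_def using locf
    by (simp add: le_less_trans)
  define y where "y = (\<lambda>k. loc_int p f k powr (1 / p))"
  define d0 where "d0 = (\<lambda>k j::int. if j = 0 then \<bar>y k\<bar> else 0)"
  define H where "H = (\<lambda>j. ennreal (1 powr (- \<theta> / (q * (1 + 1)))) *
         epowr (\<Sum>\<^sub>\<infinity> k::int. ennreal (d0 k j powr conj_exp (q * (1 + 1))))
               (1 / conj_exp (q * (1 + 1))))"
  have d0mem: "d0 \<in> {d :: int \<Rightarrow> int \<Rightarrow> real.
        (\<forall>k j. 0 \<le> d k j) \<and> (\<forall>k. (\<Sum>\<^sub>\<infinity> j::int. ennreal (d k j)) = ennreal \<bar>y k\<bar>)}"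
  proof -
    have "(\<Sum>\<^sub>\<infinity> j::int. ennreal (d0 k j)) = ennreal \<bar>y k\<bar>" for k
    proof -
      have "(\<Sum>\<^sub>\<infinity> j::int. ennreal (d0 k j)) = (\<Sum>j\<in>{0}. ennreal (d0 k j))"
        by (rule infsum_fin) (auto simp: d0_def)
      then show ?thesis by (simp add: d0_def)
    qed
    then show ?thesis by (auto simp: d0_def)
  qed
  have "small_norm p q \<theta> f \<le> (\<Sum>\<^sub>\<infinity> j::int. H j)"
    unfolding small_norm_def small_seq_norm_def y_def[symmetric]
  proof (rule INF_lower2[OF d0mem])
    show "(\<Sum>\<^sub>\<infinity> j::int. (INF \<epsilon>\<in>{0<..}.
         ennreal (\<epsilon> powr (- \<theta> / (q * (1 + \<epsilon>)))) *
         epowr (\<Sum>\<^sub>\<infinity> k::int. ennreal (d0 k j powr conj_exp (q * (1 + \<epsilon>))))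
               (1 / conj_exp (q * (1 + \<epsilon>))))) \<le> (\<Sum>\<^sub>\<infinity> j::int. H j)"
      by (rule infsum_mono) (auto intro!: nonneg_summable_on_complete INF_lower2[of 1] simp: H_def)
  qed
  also have "(\<Sum>\<^sub>\<infinity> j::int. H j) = (\<Sum>j\<in>{0}. H j)"
  proof (rule infsum_fin)
    fix j :: int assume "j \<notin> {0}"
    then show "H j = 0" by (simp add: H_def d0_def epowr_def)
  qed simp
  also have "\<dots> < \<infinity>"
  proof -
    define c where "c = conj_exp (q * (1 + 1))"
    have "(\<Sum>\<^sub>\<infinity> k::int. ennreal (d0 k 0 powr c)) = (\<Sum>k\<in>K. ennreal (d0 k 0 powr c))"
      by (rule infsum_fin[OF finK]) (simp add: d0_def y_def lfK)
    also have "\<dots> < \<infinity>" by (simp add: less_top[symmetric])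
    finally have "(\<Sum>\<^sub>\<infinity> k::int. ennreal (d0 k 0 powr c)) \<noteq> \<infinity>" by simp
    then show ?thesis unfolding H_def c_def[symmetric]
      by (simp add: epowr_def ennreal_mult[symmetric])
  qed
  finally have B: "f \<in> small_space p q \<theta>"
    unfolding small_space_def using locf by simp
  have C: "\<forall>g\<in>grand_space p q \<theta>.
           (\<integral>\<^sup>+ x\<in>E. ennreal (norm (g x)) \<partial>lebesgue) \<le> ennreal (2 * real (card K) + 1) * grand_norm p q \<theta> g"
  proof
    fix g assume "g \<in> grand_space p q \<theta>"
    then have lg: "loc_Lp p g" unfolding grand_space_def by simp
    then have gm: "g \<in> borel_measurable lebesgue" unfolding loc_Lp_def by simp
    let ?G = "grand_norm p q \<theta> g"
    have "(\<integral>\<^sup>+ x\<in>E. ennreal (norm (g x)) \<partial>lebesgue)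
        \<le> (\<integral>\<^sup>+ x. (\<Sum>k\<in>K. ennreal (norm (g x)) * indicator (unit_int k) x) \<partial>lebesgue)"
    proof (rule nn_integral_mono)
      fix x
      show "ennreal (norm (g x)) * indicator E x \<le> (\<Sum>k\<in>K. ennreal (norm (g x)) * indicator (unit_int k) x)"
      proof (cases "x \<in> E")
        case True
        have "ennreal (norm (g x)) * indicator (unit_int \<lfloor>x\<rfloor>) x
            \<le> (\<Sum>k\<in>K. ennreal (norm (g x)) * indicator (unit_int k) x)"
          by (rule member_le_sum) (use Kin[OF True] finK in auto)
        then show ?thesis using True by (simp add: unit_int_iff)
      qed simp
    qed
    also have "\<dots> = (\<Sum>k\<in>K. (\<integral>\<^sup>+ x\<in>unit_int k. ennreal (norm (g x)) \<partial>lebesgue))"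
      by (rule nn_integral_sum) (use gm in auto)
    also have "\<dots> \<le> (\<Sum>k\<in>K. 2 * ?G)"
    proof (rule sum_mono)
      fix k
      have "(\<integral>\<^sup>+ x\<in>unit_int k. ennreal (norm (g x)) \<partial>lebesgue) \<le> 2 * ennreal (loc_int p g k powr (1 / p))"
        by (rule loc_bound[OF lg assms(1)])
      also have "\<dots> \<le> 2 * ?G"
        using loc_le_grand[OF assms(1,2)] by (intro mult_left_mono) auto
      finally show "(\<integral>\<^sup>+ x\<in>unit_int k. ennreal (norm (g x)) \<partial>lebesgue) \<le> 2 * ?G" .
    qed
    also have "\<dots> = ennreal (2 * real (card K)) * ?G"
      by (simp add: ennreal_mult ennreal_of_nat_eq_real_of_nat mult_ac)
    also have "\<dots> \<le> ennreal (2 * real (card K) + 1) * ?G"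
      by (intro mult_right_mono ennreal_leI) auto
    finally show "(\<integral>\<^sup>+ x\<in>E. ennreal (norm (g x)) \<partial>lebesgue) \<le> ennreal (2 * real (card K) + 1) * ?G" .
  qed
  show ?thesis
    using A B C unfolding f_def
    by (intro conjI exI[of _ "2 * real (card K) + 1"]) auto
qed

end
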